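(* Let $X_1,\ldots,X_n$ be non-empty sets, $S\subset X_1\times\cdots\times X_n$ a finite set, and $M\subset S$ a maximal good subset of $S$. Let $C(S)$ be the space of functions on $S$, $U(S)$ the subspace of functions $f$ on $S$ of the form $f(x_1,\ldots,x_n)=u_1(x_1)+\cdots+u_n(x_n)$ on $S$ with $u_i$ functions on $\Pi_iS$, and $U(S)^\perp=\{\mu\in C(S)^*:\mu(f)=0\ \forall f\in U(S)\}$. Then $\dim U(S)^\perp=|S|-|M|$, and a basis of $U(S)^\perp$ is given by the set of measures $\mu_L$, where $L$ ranges over loops of the form $L=\{x,y_2,\ldots,y_k\}$ with $x\in S\setminus M$ and $y_2,\ldots,y_k\in M$.
   Context: $\Pi_i$ denotes the canonical projection onto $X_i$. A subset $T$ is good if every function $f$ on $T$ can be written as $f(x_1,\ldots,x_n)=u_1(x_1)+\cdots+u_n(x_n)$ on $T$ for suitable functions $u_i$ on $X_i$; $M$ is a maximal good subset of $S$ if it is good and no good subset of $S$ strictly contains it. For points $x_1,\ldots,x_k$ (with $x_j=(x_{j1},\ldots,x_{jn})$) and numbers $c_j$, the formal sum $\sum_jc_jx_j$ vanishes if for every $i$ and every $a\in X_i$, $\sum_{j:\,x_{ji}=a}c_j=0$. A non-empty finite set $L=\{x_1,\ldots,x_k\}$ of distinct points is a loop if there are non-zero integers $n_1,\ldots,n_k$ with $\sum_jn_jx_j$ vanishing and no strictly smaller non-empty subset of $L$ has this property; such integers can be taken with $\gcd=1$, uniquely up to a global sign. For such a loop, $\mu_L$ is the measure on $S$ with $\mu_L(x_j)=n_j/(|n_1|+\cdots+|n_k|)$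 and $\mu_L(x)=0$ for $x\notin L$ (for a fixed choice of sign). *)

theory Defs
  imports Complex_Main "HOL-Library.Function_Algebras" "HOL-Library.FuncSet"
begin

text \<open>Points of X_1 x ... x X_n are modelled as extensional functions
  x :: nat => 'a with x i in X i for i < n (i.e. elements of PiE {..<n} X);
  coordinate i (0-based) is x i.\<close>

definition good :: "nat \<Rightarrow> (nat \<Rightarrow> 'a) set \<Rightarrow> bool" where
  "good n T \<longleftrightarrow> (\<forall>f :: (nat \<Rightarrow> 'a) \<Rightarrow> real.
      \<exists>u :: nat \<Rightarrow> 'a \<Rightarrow> real. \<forall>x\<in>T. f x = (\<Sum>i<n. u i (x i)))"

definition maximal_good :: "nat \<Rightarrow> (nat \<Rightarrow> 'a) set \<Rightarrow> (nat \<Rightarrow> 'a) set \<Rightarrow> bool" where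
  "maximal_good n S M \<longleftrightarrow> M \<subseteq> S \<and> good n M \<and>
      (\<forall>T. M \<subset> T \<and> T \<subseteq> S \<longrightarrow> \<not> good n T)"

text \<open>The formal sum  sum_{y in L} c y * y  vanishes.\<close>
definition vanishes :: "nat \<Rightarrow> (nat \<Rightarrow> 'a set) \<Rightarrow> ((nat \<Rightarrow> 'a) \<Rightarrow> int) \<Rightarrow> (nat \<Rightarrow> 'a) set \<Rightarrow> bool" where
  "vanishes n X c L \<longleftrightarrow> (\<forall>i<n. \<forall>a\<in>X i. (\<Sum>y\<in>{y\<in>L. y i = a}. c y) = 0)"

definition has_vanishing_coeffs :: "nat \<Rightarrow> (nat \<Rightarrow> 'a set) \<Rightarrow> (nat \<Rightarrow> 'a) set \<Rightarrow> bool" where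
  "has_vanishing_coeffs n X L \<longleftrightarrow> (\<exists>c. (\<forall>y\<in>L. c y \<noteq> 0) \<and> vanishes n X c L)"

definition is_loop :: "nat \<Rightarrow> (nat \<Rightarrow> 'a set) \<Rightarrow> (nat \<Rightarrow> 'a) set \<Rightarrow> bool" where
  "is_loop n X L \<longleftrightarrow> finite L \<and> L \<noteq> {} \<and> has_vanishing_coeffs n X L \<and>
      (\<forall>L'. L' \<subset> L \<and> L' \<noteq> {} \<longrightarrow> \<not> has_vanishing_coeffs n X L')"

text \<open>mu is (one of the two sign choices of) the measure mu_L of the loop L.\<close>
definition is_loop_measure :: "nat \<Rightarrow> (nat \<Rightarrow> 'a set) \<Rightarrow> (nat \<Rightarrow> 'a) set \<Rightarrow> ((nat \<Rightarrow> 'a) \<Rightarrow> real) \<Rightarrow> bool" where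
  "is_loop_measure n X L \<mu> \<longleftrightarrow> (\<exists>c :: (nat \<Rightarrow> 'a) \<Rightarrow> int.
      (\<forall>y\<in>L. c y \<noteq> 0) \<and> vanishes n X c L \<and> Gcd (c ` L) = 1 \<and>
      \<mu> = (\<lambda>x. if x \<in> L then real_of_int (c x) / real_of_int (\<Sum>y\<in>L. \<bar>c y\<bar>) else 0))"

definition U_space :: "nat \<Rightarrow> (nat \<Rightarrow> 'a) set \<Rightarrow> ((nat \<Rightarrow> 'a) \<Rightarrow> real) set" where
  "U_space n S = {f. \<exists>u :: nat \<Rightarrow> 'a \<Rightarrow> real. \<forall>x\<in>S. f x = (\<Sum>i<n. u i (x i))}"

text \<open>Linear functionals on C(S) (S finite) are identified with functions
  mu on points vanishing outside S, acting by mu(f) = sum_{x in S} mu x * f x.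
  U(S)^perp is the annihilator of U(S).\<close>
definition U_perp :: "nat \<Rightarrow> (nat \<Rightarrow> 'a) set \<Rightarrow> ((nat \<Rightarrow> 'a) \<Rightarrow> real) set" where
  "U_perp n S = {\<mu>. (\<forall>x. x \<notin> S \<longrightarrow> \<mu> x = 0) \<and>
      (\<forall>f\<in>U_space n S. (\<Sum>x\<in>S. \<mu> x * f x) = 0)}"

definition fscale :: "real \<Rightarrow> ('b \<Rightarrow> real) \<Rightarrow> ('b \<Rightarrow> real)" where
  "fscale c f = (\<lambda>x. c * f x)"

end

theory Submission
  imports Defs
begin


lemma qlin: "\<exists>\<phi>::real \<Rightarrow> rat. \<phi> 1 = 1 \<and> (\<forall>a b. \<phi> (a+b) = \<phi> a + \<phi> b)"
proof -
  interpret vs1: vector_space "\<lambda>(q::rat) (r::real). of_rat q * r"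
    by unfold_locales (auto simp: algebra_simps of_rat_add of_rat_mult)
  interpret vs2: vector_space "\<lambda>(q::rat) (r::rat). q * r"
    by unfold_locales (auto simp: algebra_simps)
  interpret vector_space_pair "\<lambda>(q::rat) (r::real). of_rat q * r" "\<lambda>(q::rat) (r::rat). q * r"
    by unfold_locales
  have ind: "vs1.independent {1::real}" by simp
  define \<phi> where "\<phi> = construct {1::real} (\<lambda>_. 1)"
  have l: "Vector_Spaces.linear (\<lambda>(q::rat) (r::real). of_rat q * r) (\<lambda>(q::rat) (r::rat). q * r) \<phi>"
    unfolding \<phi>_def by (rule linear_construct[OF ind])
  have "\<phi> 1 = 1" unfolding \<phi>_def by (rule construct_basis[OF ind]) simp
  moreover have "\<forall>a b. \<phi> (a+b) = \<phi> a + \<phi> b" using linear_add[OF l] by blast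
  ultimately show ?thesis by blast
qed

lemma add_sum:
  assumes "\<forall>a b. \<phi> (a+b) = \<phi> a + \<phi> b"
  shows "\<phi> (sum f A) = (\<Sum>x\<in>A. \<phi> (f x :: real) :: rat)"
proof -
  have z: "\<phi> 0 = 0" using assms[rule_format, of 0 0] by simp
  show ?thesis
  proof (cases "finite A")
    case True then show ?thesis by (induction A rule: finite_induct) (auto simp: z assms)
  qed (simp add: z)
qed

lemma vs: "vector_space fscale"
  by unfold_locales (auto simp: fscale_def algebra_simps fun_eq_iff)



definition rdep :: "nat \<Rightarrow> (nat \<Rightarrow> 'a set) \<Rightarrow> (nat \<Rightarrow> 'a) set \<Rightarrow> ((nat \<Rightarrow> 'a) \<Rightarrow> real) \<Rightarrow> bool" where
  "rdep n X T \<mu> \<longleftrightarrow> (\<forall>i<n. \<forall>a\<in>X i. (\<Sum>y\<in>{y\<in>T. y i = a}. \<mu> y) = 0)"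

lemma sum_fun_apply: "(\<Sum>v\<in>A. (f v :: 'b \<Rightarrow> real)) x = (\<Sum>v\<in>A. f v x)"
  by (induction A rule: infinite_finite_induct) auto

lemma rdep_orth1:
  assumes "finite T" "T \<subseteq> PiE {..<n} X" "rdep n X T \<mu>" "i < n"
  shows "(\<Sum>y\<in>T. \<mu> y * g (y i)) = 0"
proof -
  have img: "(\<lambda>y. y i) ` T \<subseteq> X i" using assms(2,4) by (auto simp: PiE_def Pi_def)
  have "(\<Sum>y\<in>T. \<mu> y * g (y i)) = (\<Sum>a\<in>(\<lambda>y. y i) ` T. \<Sum>y\<in>{y\<in>T. y i = a}. \<mu> y * g (y i))"
    by (rule sum.group[symmetric]) (use assms(1) in auto)
  also have "\<dots> = (\<Sum>a\<in>(\<lambda>y. y i) ` T. g a * (\<Sum>y\<in>{y\<in>T. y i = a}. \<mu> y))"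
    by (auto simp: sum_distrib_left mult.commute intro!: sum.cong)
  also have "\<dots> = 0"
    using img assms(3,4) unfolding rdep_def by (auto intro!: sum.neutral)
  finally show ?thesis .
qed

lemma rdep_orth:
  assumes "finite T" "T \<subseteq> PiE {..<n} X" "rdep n X T \<mu>"
  shows "(\<Sum>y\<in>T. \<mu> y * (\<Sum>i<n. u i (y i))) = 0"
proof -
  have "(\<Sum>y\<in>T. \<mu> y * (\<Sum>i<n. u i (y i))) = (\<Sum>i<n. \<Sum>y\<in>T. \<mu> y * u i (y i))"
    by (simp add: sum_distrib_left sum.swap[of _ T])
  also have "\<dots> = 0" using rdep_orth1[OF assms] by simp
  finally show ?thesis .
qed

lemma good_rdep_zero:
  assumes "finite M" "M \<subseteq> PiE {..<n} X" "good n M" "rdep n X M \<mu>" "y0 \<in> M"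
  shows "\<mu> y0 = 0"
proof -
  from assms(3)[unfolded good_def, rule_format, of "\<lambda>x. if x = y0 then 1 else 0"]
  obtain u where u: "\<forall>x\<in>M. (if x = y0 then 1 else 0::real) = (\<Sum>i<n. u i (x i))"
    by blast
  have "0 = (\<Sum>y\<in>M. \<mu> y * (\<Sum>i<n. u i (y i)))" using rdep_orth[OF assms(1,2,4)] by simp
  also have "\<dots> = (\<Sum>y\<in>M. \<mu> y * (if y = y0 then 1 else 0))"
    using u by (intro sum.cong) auto
  also have "\<dots> = \<mu> y0" using assms(1,5) by (simp add: if_distrib cong: if_cong)
  finally show ?thesis by simp
qed

lemma perp_iff:
  assumes "finite S" "S \<subseteq> PiE {..<n} X"
  shows "\<mu> \<in> U_perp n S \<longleftrightarrow> (\<forall>x. x \<notin> S \<longrightarrow> \<mu> x = 0) \<and> rdep n X S \<mu>"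
proof
  assume R: "(\<forall>x. x \<notin> S \<longrightarrow> \<mu> x = 0) \<and> rdep n X S \<mu>"
  show "\<mu> \<in> U_perp n S"
    unfolding U_perp_def
  proof (intro CollectI conjI ballI)
    show "\<forall>x. x \<notin> S \<longrightarrow> \<mu> x = 0" using R by blast
    fix f assume "f \<in> U_space n S"
    then obtain u where u: "\<forall>x\<in>S. f x = (\<Sum>i<n. u i (x i))" unfolding U_space_def by blast
    have "(\<Sum>x\<in>S. \<mu> x * f x) = (\<Sum>y\<in>S. \<mu> y * (\<Sum>i<n. u i (y i)))" using u by auto
    also have "\<dots> = 0" using rdep_orth[OF assms] R by blast
    finally show "(\<Sum>x\<in>S. \<mu> x * f x) = 0" .
  qed
next
  assume P: "\<mu> \<in> U_perp n S"
  have "rdep n X S \<mu>" unfolding rdep_def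
  proof (intro allI impI ballI)
    fix i a assume i: "i < n" and "a \<in> X i"
    define u where "u = (\<lambda>j b. if j = i then (if b = a then 1 else 0) else (0::real))"
    have su: "(\<Sum>j<n. u j (z j)) = (if z i = a then 1 else 0)" for z :: "nat \<Rightarrow> 'a"
    proof -
      have "(\<Sum>j<n. u j (z j)) = (\<Sum>j<n. if j = i then (if z i = a then 1 else 0) else 0)"
        by (intro sum.cong) (auto simp: u_def)
      also have "\<dots> = (if z i = a then 1 else 0)" using i by simp
      finally show ?thesis .
    qed
    have mem: "(\<lambda>z. if z i = a then 1 else 0) \<in> U_space n S"
      unfolding U_space_def using su by (intro CollectI exI[of _ u]) simp
    have "\<forall>f\<in>U_space n S. (\<Sum>x\<in>S. \<mu> x * f x) = 0" using P unfolding U_perp_def by blast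
    from bspec[OF this mem] have "(\<Sum>x\<in>S. \<mu> x * (if x i = a then 1 else 0)) = 0" by simp
    then show "(\<Sum>y\<in>{y\<in>S. y i = a}. \<mu> y) = 0"
      using assms(1) by (simp add: sum.inter_filter if_distrib cong: if_cong)
  qed
  then show "(\<forall>x. x \<notin> S \<longrightarrow> \<mu> x = 0) \<and> rdep n X S \<mu>" using P unfolding U_perp_def by blast
qed

lemma key_zero:
  assumes "finite S" "S \<subseteq> PiE {..<n} X" "M \<subseteq> S" "good n M" "\<mu> \<in> U_perp n S"
    "\<forall>x\<in>S - M. \<mu> x = 0"
  shows "\<mu> = (\<lambda>_. 0)"
proof -
  have P: "\<forall>x. x \<notin> S \<longrightarrow> \<mu> x = 0" "rdep n X S \<mu>" using perp_iff[OF assms(1,2)] assms(5) by auto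
  have fM: "finite M" using assms(1,3) finite_subset by blast
  have "rdep n X M \<mu>" unfolding rdep_def
  proof (intro allI impI ballI)
    fix i a assume "i < n" "a \<in> X i"
    have "(\<Sum>y\<in>{y\<in>M. y i = a}. \<mu> y) = (\<Sum>y\<in>{y\<in>S. y i = a}. \<mu> y)"
      by (rule sum.mono_neutral_left) (use assms(1,3,6) in auto)
    then show "(\<Sum>y\<in>{y\<in>M. y i = a}. \<mu> y) = 0" using P(2) \<open>i < n\<close> \<open>a \<in> X i\<close> unfolding rdep_def by simp
  qed
  then have "\<forall>y\<in>M. \<mu> y = 0" using good_rdep_zero[OF fM _ assms(4)] assms(2,3) by blast
  then show ?thesis using P(1) assms(6) by (auto simp: fun_eq_iff)
qed

lemma md: "module fscale"
  by unfold_locales (auto simp: fscale_def algebra_simps fun_eq_iff)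

lemma perp_subspace:
  assumes "finite S" "S \<subseteq> PiE {..<n} X"
  shows "module.subspace fscale (U_perp n S)"
proof (rule module.subspaceI[OF md])
  show "0 \<in> U_perp n S" unfolding perp_iff[OF assms] rdep_def by simp
  fix x y assume "x \<in> U_perp n S" "y \<in> U_perp n S"
  then show "x + y \<in> U_perp n S" unfolding perp_iff[OF assms] rdep_def by (simp add: sum.distrib)
next
  fix c x assume "x \<in> U_perp n S"
  then show "fscale c x \<in> U_perp n S" unfolding perp_iff[OF assms] rdep_def
    by (simp add: fscale_def sum_distrib_left[symmetric])
qed



lemma exists_dep:
  assumes fM: "finite M" and gM: "good n M" and xM: "x \<notin> M" and ng: "\<not> good n (insert x M)"
  shows "\<exists>\<mu>. \<mu> x = 1 \<and> (\<forall>y. y \<notin> insert x M \<longrightarrow> \<mu> y = 0) \<and> rdep n X (insert x M) \<mu>"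
proof -
  have step1: "(\<Sum>j<n. u j (x j)) = 0" if "\<forall>z\<in>M. (\<Sum>j<n. u j (z j)) = (0::real)" for u
  proof (rule ccontr)
    assume s0: "(\<Sum>j<n. u j (x j)) \<noteq> 0"
    have "good n (insert x M)" unfolding good_def
    proof
      fix f :: "(nat \<Rightarrow> 'a) \<Rightarrow> real"
      from gM[unfolded good_def, rule_format, of f] obtain v where
        v: "\<forall>z\<in>M. f z = (\<Sum>i<n. v i (z i))" by blast
      define t where "t = (f x - (\<Sum>j<n. v j (x j))) / (\<Sum>j<n. u j (x j))"
      define w where "w = (\<lambda>j b. v j b + t * u j b)"
      have sw: "(\<Sum>j<n. w j (z j)) = (\<Sum>j<n. v j (z j)) + t * (\<Sum>j<n. u j (z j))" for z
        by (simp add: w_def sum.distrib sum_distrib_left)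
      have "\<forall>z\<in>insert x M. f z = (\<Sum>i<n. w i (z i))"
        using s0 v that by (auto simp: sw t_def)
      then show "\<exists>w. \<forall>z\<in>insert x M. f z = (\<Sum>i<n. w i (z i))" by blast
    qed
    with ng show False by blast
  qed
  have "\<forall>y\<in>M. \<exists>v. \<forall>z\<in>M. (if z = y then 1 else 0::real) = (\<Sum>i<n. v i (z i))"
  proof
    fix y assume "y \<in> M"
    from gM[unfolded good_def, rule_format, of "\<lambda>z. if z = y then 1 else 0"]
    show "\<exists>v. \<forall>z\<in>M. (if z = y then 1 else 0::real) = (\<Sum>i<n. v i (z i))" by blast
  qed
  then obtain U where U: "\<And>y z. y \<in> M \<Longrightarrow> z \<in> M \<Longrightarrow> (if z = y then 1 else 0::real) = (\<Sum>i<n. U y i (z i))"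
    by metis
  define lam where "lam y = (\<Sum>j<n. U y j (x j))" for y
  define \<mu> where "\<mu> = (\<lambda>z. if z = x then 1 else if z \<in> M then - lam z else (0::real))"
  have "rdep n X (insert x M) \<mu>" unfolding rdep_def
  proof (intro allI impI ballI)
    fix i a assume i: "i < n" and "a \<in> X i"
    define u' where "u' = (\<lambda>j b. (if j = i then (if b = a then 1 else 0) else 0)
        - (\<Sum>y\<in>M. (if y i = a then 1 else 0) * U y j b))"
    have su: "(\<Sum>j<n. (if j = i then (if z j = a then 1 else 0) else (0::real))) = (if z i = a then 1 else 0)" for z :: "nat \<Rightarrow> 'a"
    proof -
      have "(\<Sum>j<n. (if j = i then (if z j = a then 1 else 0) else (0::real))) = (\<Sum>j<n. if j = i then (if z i = a then 1 else 0) else 0)"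
        by (intro sum.cong) auto
      also have "\<dots> = (if z i = a then 1 else 0)" using i by simp
      finally show ?thesis .
    qed
    have su': "(\<Sum>j<n. u' j (z j)) = (if z i = a then 1 else 0) - (\<Sum>y\<in>M. (if y i = a then 1 else 0) * (\<Sum>j<n. U y j (z j)))" for z
      by (simp add: u'_def sum_subtractf su sum_distrib_left sum.swap[of _ M])
    have "\<forall>z\<in>M. (\<Sum>j<n. u' j (z j)) = 0"
    proof
      fix z assume z: "z \<in> M"
      have "(\<Sum>y\<in>M. (if y i = a then 1 else 0) * (\<Sum>j<n. U y j (z j))) = (\<Sum>y\<in>M. (if y i = a then 1 else 0) * (if z = y then 1 else (0::real)))"
        using U z by (intro sum.cong) auto
      also have "\<dots> = (if z i = a then 1 else 0)" using z fM
        by (simp add: if_distrib[of "\<lambda>t. _ * t"] cong: if_cong)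
      finally show "(\<Sum>j<n. u' j (z j)) = 0" by (simp add: su')
    qed
    from step1[OF this] have e: "(if x i = a then 1 else 0) = (\<Sum>y\<in>M. (if y i = a then 1 else 0) * lam y)"
      by (simp add: su' lam_def)
    have "(\<Sum>y\<in>{y\<in>insert x M. y i = a}. \<mu> y) = (\<Sum>y\<in>insert x M. if y i = a then \<mu> y else 0)"
      by (rule sum.inter_filter) (simp add: fM)
    also have "\<dots> = (if x i = a then 1 else 0) + (\<Sum>y\<in>M. if y i = a then - lam y else 0)"
      using fM xM by (auto simp: \<mu>_def intro!: sum.cong)
    also have "\<dots> = 0" using e by (simp add: if_distrib[of "\<lambda>t. t * _"] sum.distrib[symmetric] cong: if_cong) (intro sum.neutral, auto)
    finally show "(\<Sum>y\<in>{y\<in>insert x M. y i = a}. \<mu> y) = 0" .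
  qed
  moreover have "\<mu> x = 1" "\<forall>y. y \<notin> insert x M \<longrightarrow> \<mu> y = 0" by (auto simp: \<mu>_def)
  ultimately show ?thesis by blast
qed



lemma int_dep:
  assumes fT: "finite T" and x1: "\<mu> x = 1" and supp: "\<forall>y. y \<notin> T \<longrightarrow> \<mu> y = 0"
    and rd: "rdep n X T \<mu>"
  shows "\<exists>c::(nat \<Rightarrow> 'a) \<Rightarrow> int. c x \<noteq> 0 \<and> (\<forall>y. y \<notin> T \<longrightarrow> c y = 0) \<and> vanishes n X c T"
proof -
  obtain \<phi> :: "real \<Rightarrow> rat" where p1: "\<phi> 1 = 1" and padd: "\<forall>a b. \<phi> (a+b) = \<phi> a + \<phi> b"
    using qlin by blast
  have p0: "\<phi> 0 = 0" using padd[rule_format, of 0 0] by simp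
  have xT: "x \<in> T" using supp x1 by force
  define q where "q y = \<phi> (\<mu> y)" for y
  define d where "d = (\<Prod>y\<in>T. snd (quotient_of (q y)))"
  define c where "c y = (if y \<in> T then fst (quotient_of (q y)) * (d div snd (quotient_of (q y))) else 0)" for y
  have dpos: "d > 0" unfolding d_def by (intro prod_pos) (simp add: quotient_of_denom_pos')
  have cq: "(of_int (c y) :: rat) = of_int d * q y" if "y \<in> T" for y
  proof -
    obtain p r where pr: "quotient_of (q y) = (p, r)" by (cases "quotient_of (q y)")
    have r: "r > 0" using quotient_of_denom_pos[OF pr] .
    have qy: "q y = of_int p / of_int r" using quotient_of_div[OF pr] .
    have "r dvd d" unfolding d_def using fT that pr
      by (metis dvd_prodI snd_conv)
    then have "(of_int (d div r) :: rat) = of_int d / of_int r" by (rule of_int_div)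
    then show ?thesis using that pr r by (simp add: c_def qy)
  qed
  have "vanishes n X c T" unfolding vanishes_def
  proof (intro allI impI ballI)
    fix i a assume "i < n" "a \<in> X i"
    then have "(\<Sum>y\<in>{y\<in>T. y i = a}. \<mu> y) = 0" using rd unfolding rdep_def by blast
    then have "\<phi> (\<Sum>y\<in>{y\<in>T. y i = a}. \<mu> y) = 0" using p0 by simp
    then have "(\<Sum>y\<in>{y\<in>T. y i = a}. q y) = 0" unfolding q_def add_sum[OF padd] .
    then have "(of_int (\<Sum>y\<in>{y\<in>T. y i = a}. c y) :: rat) = 0"
      by (simp add: of_int_sum cq sum_distrib_left[symmetric])
    then show "(\<Sum>y\<in>{y\<in>T. y i = a}. c y) = 0" by (simp only: of_int_eq_0_iff)
  qed
  moreover have "c x \<noteq> 0"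
  proof
    assume "c x = 0"
    then have "(of_int d :: rat) * q x = 0" using cq[OF xT] by simp
    then show False using dpos p1 x1 by (simp add: q_def)
  qed
  moreover have "\<forall>y. y \<notin> T \<longrightarrow> c y = 0" by (simp add: c_def)
  ultimately show ?thesis by blast
qed

lemma loop_exists:
  assumes fS: "finite S" and SP: "S \<subseteq> PiE {..<n} X" and MS: "M \<subseteq> S" and gM: "good n M"
    and x: "x \<in> S - M" and cx: "c x \<noteq> 0" and supp: "\<forall>y. y \<notin> insert x M \<longrightarrow> c y = 0"
    and van: "vanishes n X c (insert x M)"
  shows "\<exists>L. is_loop n X L \<and> x \<in> L \<and> L - {x} \<subseteq> M"
proof -
  have fM: "finite M" using fS MS finite_subset by blast
  define K where "K = {y\<in>insert x M. c y \<noteq> 0}"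
  have fK: "finite K" using fM unfolding K_def by simp
  have "vanishes n X c K" unfolding vanishes_def
  proof (intro allI impI ballI)
    fix i a assume "i < n" "a \<in> X i"
    have "(\<Sum>y\<in>{y\<in>K. y i = a}. c y) = (\<Sum>y\<in>{y\<in>insert x M. y i = a}. c y)"
      by (rule sum.mono_neutral_left) (use fM in \<open>auto simp: K_def\<close>)
    then show "(\<Sum>y\<in>{y\<in>K. y i = a}. c y) = 0" using van \<open>i < n\<close> \<open>a \<in> X i\<close> unfolding vanishes_def by simp
  qed
  then have hK: "has_vanishing_coeffs n X K" unfolding has_vanishing_coeffs_def K_def by blast
  define P where "P L \<longleftrightarrow> L \<subseteq> K \<and> L \<noteq> {} \<and> has_vanishing_coeffs n X L" for L
  have "P K" using hK cx unfolding P_def K_def by auto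
  then obtain L where PL: "P L" and Lmin: "\<And>L'. P L' \<Longrightarrow> card L \<le> card L'"
    using ex_has_least_nat[of P K card] by blast
  have fL: "finite L" using PL fK finite_subset unfolding P_def by blast
  have loop: "is_loop n X L" unfolding is_loop_def
  proof (intro conjI allI impI)
    show "finite L" by fact
    show "L \<noteq> {}" "has_vanishing_coeffs n X L" using PL unfolding P_def by auto
    fix L' assume L': "L' \<subset> L \<and> L' \<noteq> {}"
    show "\<not> has_vanishing_coeffs n X L'"
    proof
      assume "has_vanishing_coeffs n X L'"
      then have "P L'" using L' PL unfolding P_def by auto
      then have "card L \<le> card L'" by (rule Lmin)
      moreover have "card L' < card L" using L' fL psubset_card_mono by blast
      ultimately show False by simp
    qed
  qed
  have LK: "L \<subseteq> insert x M" using PL unfolding P_def K_def by auto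
  have "x \<in> L"
  proof (rule ccontr)
    assume xL: "x \<notin> L"
    then have LM: "L \<subseteq> M" using LK by auto
    obtain cL where cL: "\<forall>y\<in>L. cL y \<noteq> 0" "vanishes n X cL L"
      using PL unfolding P_def has_vanishing_coeffs_def by blast
    define \<mu> where "\<mu> y = (if y \<in> L then real_of_int (cL y) else 0)" for y
    have "rdep n X M \<mu>" unfolding rdep_def
    proof (intro allI impI ballI)
      fix i a assume "i < n" "a \<in> X i"
      have "(\<Sum>y\<in>{y\<in>M. y i = a}. \<mu> y) = (\<Sum>y\<in>{y\<in>L. y i = a}. \<mu> y)"
        by (rule sum.mono_neutral_right) (use fM LM in \<open>auto simp: \<mu>_def\<close>)
      also have "\<dots> = of_int (\<Sum>y\<in>{y\<in>L. y i = a}. cL y)" by (simp add: \<mu>_def of_int_sum)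
      also have "\<dots> = 0" using cL(2) \<open>i < n\<close> \<open>a \<in> X i\<close> unfolding vanishes_def by simp
      finally show "(\<Sum>y\<in>{y\<in>M. y i = a}. \<mu> y) = 0" .
    qed
    moreover obtain y where "y \<in> L" using PL unfolding P_def by blast
    ultimately have "\<mu> y = 0" using good_rdep_zero[OF fM _ gM] MS SP LM by blast
    with \<open>y \<in> L\<close> cL(1) show False by (simp add: \<mu>_def)
  qed
  with loop LK show ?thesis by blast
qed



lemma loop_measure_props:
  assumes lm: "is_loop_measure n X L \<mu>" and fL: "finite L" and Lne: "L \<noteq> {}" and LS: "L \<subseteq> S"
    and fS: "finite S" and SP: "S \<subseteq> PiE {..<n} X"
  shows "(\<forall>y. \<mu> y \<noteq> 0 \<longleftrightarrow> y \<in> L) \<and> \<mu> \<in> U_perp n S"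
proof -
  obtain c :: "_ \<Rightarrow> int" where c: "\<forall>y\<in>L. c y \<noteq> 0" "vanishes n X c L"
    and mu: "\<mu> = (\<lambda>x. if x \<in> L then real_of_int (c x) / real_of_int (\<Sum>y\<in>L. \<bar>c y\<bar>) else 0)"
    using lm unfolding is_loop_measure_def by blast
  define D where "D = real_of_int (\<Sum>y\<in>L. \<bar>c y\<bar>)"
  have "(\<Sum>y\<in>L. \<bar>c y\<bar>) > 0" using c(1) fL Lne
    by (intro sum_pos) auto
  then have D: "D > 0" unfolding D_def by (simp only: of_int_0_less_iff)
  have mu': "\<mu> = (\<lambda>x. if x \<in> L then real_of_int (c x) / D else 0)" unfolding D_def by (rule mu)
  have 1: "\<forall>y. \<mu> y \<noteq> 0 \<longleftrightarrow> y \<in> L" using c(1) D by (auto simp: mu')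
  have "rdep n X S \<mu>" unfolding rdep_def
  proof (intro allI impI ballI)
    fix i a assume "i < n" "a \<in> X i"
    have "(\<Sum>y\<in>{y\<in>S. y i = a}. \<mu> y) = (\<Sum>y\<in>{y\<in>L. y i = a}. \<mu> y)"
      by (rule sum.mono_neutral_right) (use fS LS in \<open>auto simp: mu'\<close>)
    also have "\<dots> = of_int (\<Sum>y\<in>{y\<in>L. y i = a}. c y) / D"
      by (simp add: mu' of_int_sum sum_divide_distrib)
    also have "\<dots> = 0" using c(2) \<open>i < n\<close> \<open>a \<in> X i\<close> unfolding vanishes_def by simp
    finally show "(\<Sum>y\<in>{y\<in>S. y i = a}. \<mu> y) = 0" .
  qed
  then have "\<mu> \<in> U_perp n S" unfolding perp_iff[OF fS SP] using 1 LS by blast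
  with 1 show ?thesis by blast
qed

theorem theorem4:
  fixes n :: nat and X :: "nat \<Rightarrow> 'a set"
    and S M :: "(nat \<Rightarrow> 'a) set"
    and \<sigma> :: "(nat \<Rightarrow> 'a) set \<Rightarrow> ((nat \<Rightarrow> 'a) \<Rightarrow> real)"
  assumes "\<forall>i<n. X i \<noteq> {}"
    and "S \<subseteq> PiE {..<n} X" and "finite S"
    and "maximal_good n S M"
  defines "Loops \<equiv> {L. is_loop n X L \<and> (\<exists>x\<in>S - M. x \<in> L \<and> L - {x} \<subseteq> M)}"
  assumes "\<forall>L\<in>Loops. is_loop_measure n X L (\<sigma> L)"
  shows "vector_space.dim fscale (U_perp n S) = card S - card M
    \<and> \<sigma> ` Loops \<subseteq> U_perp n S
    \<and> \<not> module.dependent fscale (\<sigma> ` Loops)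
    \<and> module.span fscale (\<sigma> ` Loops) = U_perp n S"
proof -
  have SP: "S \<subseteq> PiE {..<n} X" and fS: "finite S" using assms by auto
  have MS: "M \<subseteq> S" and gM: "good n M" and maxM: "\<And>T. M \<subset> T \<Longrightarrow> T \<subseteq> S \<Longrightarrow> \<not> good n T"
    using assms(4) unfolding maximal_good_def by auto
  have fM: "finite M" using fS MS finite_subset by blast
  define xo where "xo L = (SOME x. x \<in> S - M \<and> x \<in> L \<and> L - {x} \<subseteq> M)" for L
  have Lp: "is_loop n X L \<and> xo L \<in> S - M \<and> xo L \<in> L \<and> L - {xo L} \<subseteq> M" if "L \<in> Loops" for L
  proof -
    have "\<exists>x. x \<in> S - M \<and> x \<in> L \<and> L - {x} \<subseteq> M" using that unfolding Loops_def by blast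
    from someI_ex[OF this] show ?thesis using that unfolding Loops_def xo_def by blast
  qed
  have LS: "L \<subseteq> S" if "L \<in> Loops" for L using Lp[OF that] MS by blast
  have Lprops: "(\<forall>y. \<sigma> L y \<noteq> 0 \<longleftrightarrow> y \<in> L) \<and> \<sigma> L \<in> U_perp n S" if "L \<in> Loops" for L
  proof -
    have "is_loop_measure n X L (\<sigma> L)" using assms(6) that by blast
    moreover have "finite L" "L \<noteq> {}" using Lp[OF that] unfolding is_loop_def by auto
    ultimately show ?thesis by (rule loop_measure_props[OF _ _ _ LS[OF that] fS SP])
  qed
  have uniqx: "y = xo L" if "L \<in> Loops" "y \<in> L" "y \<in> S - M" for L y
    using Lp[OF that(1)] that by blast
  have sub: "module.subspace fscale (U_perp n S)" by (rule perp_subspace[OF fS SP])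
  have inj: "L1 = L2" if L: "L1 \<in> Loops" "L2 \<in> Loops" and e: "xo L1 = xo L2" for L1 L2
  proof -
    define x where "x = xo L1"
    have x1: "\<sigma> L1 x \<noteq> 0" "\<sigma> L2 x \<noteq> 0" using Lp[OF L(1)] Lp[OF L(2)] Lprops[OF L(1)] Lprops[OF L(2)] e
      unfolding x_def by auto
    define t where "t = \<sigma> L2 x / \<sigma> L1 x"
    define \<nu> where "\<nu> = \<sigma> L2 - fscale t (\<sigma> L1)"
    have "\<nu> \<in> U_perp n S" unfolding \<nu>_def
      using module.subspace_diff[OF md sub] module.subspace_scale[OF md sub] Lprops[OF L(1)] Lprops[OF L(2)]
      by blast
    moreover have "\<forall>z\<in>S - M. \<nu> z = 0"
    proof
      fix z assume z: "z \<in> S - M"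
      show "\<nu> z = 0"
      proof (cases "z = x")
        case True then show ?thesis using x1 by (simp add: \<nu>_def fscale_def t_def)
      next
        case False
        then have "z \<notin> L1" "z \<notin> L2" using uniqx[OF L(1) _ z] uniqx[OF L(2) _ z] e x_def by auto
        then have "\<sigma> L1 z = 0" "\<sigma> L2 z = 0" using Lprops[OF L(1)] Lprops[OF L(2)] by blast+
        then show ?thesis by (simp add: \<nu>_def fscale_def)
      qed
    qed
    ultimately have "\<nu> = (\<lambda>_. 0)" using key_zero[OF fS SP MS gM] by blast
    then have eq: "\<sigma> L2 y = t * \<sigma> L1 y" for y unfolding \<nu>_def fscale_def by (simp add: fun_eq_iff)
    have "t \<noteq> 0" using x1 by (simp add: t_def)
    then show "L1 = L2" using eq Lprops[OF L(1)] Lprops[OF L(2)] by auto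
  qed
  have ex: "\<exists>L\<in>Loops. xo L = x" if x: "x \<in> S - M" for x
  proof -
    have "\<not> good n (insert x M)" using maxM[of "insert x M"] x MS by blast
    from exists_dep[OF fM gM _ this] x obtain \<mu> where
      mu: "\<mu> x = 1" "\<forall>y. y \<notin> insert x M \<longrightarrow> \<mu> y = 0" "rdep n X (insert x M) \<mu>" by blast
    from int_dep[OF _ mu] fM obtain c where
      c: "c x \<noteq> 0" "\<forall>y. y \<notin> insert x M \<longrightarrow> c y = 0" "vanishes n X c (insert x M)" by auto
    from loop_exists[OF fS SP MS gM x c] obtain L where
      L: "is_loop n X L" "x \<in> L" "L - {x} \<subseteq> M" by blast
    then have LL: "L \<in> Loops" unfolding Loops_def using x by blast
    show ?thesis using uniqx[OF LL L(2) x] LL by blast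
  qed
  define B where "B = \<sigma> ` Loops"
  have fLoops: "finite Loops"
    by (rule finite_subset[of _ "Pow S"]) (use LS fS in auto)
  have fB: "finite B" unfolding B_def using fLoops by simp
  have BU: "B \<subseteq> U_perp n S" unfolding B_def using Lprops by blast
  have injs: "inj_on \<sigma> Loops"
  proof (rule inj_onI)
    fix L1 L2 assume "L1 \<in> Loops" "L2 \<in> Loops" "\<sigma> L1 = \<sigma> L2"
    then have "y \<in> L1 \<longleftrightarrow> y \<in> L2" for y using Lprops[of L1] Lprops[of L2] by metis
    then show "L1 = L2" by blast
  qed
  have bij: "bij_betw xo Loops (S - M)"
    unfolding bij_betw_def
  proof
    show "inj_on xo Loops" by (rule inj_onI) (rule inj)
    show "xo ` Loops = S - M"
    proof
      show "xo ` Loops \<subseteq> S - M" using Lp by blast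
      show "S - M \<subseteq> xo ` Loops"
      proof
        fix x assume "x \<in> S - M"
        from ex[OF this] obtain L where "L \<in> Loops" "xo L = x" by blast
        then show "x \<in> xo ` Loops" by blast
      qed
    qed
  qed
  have cardB: "card B = card S - card M"
    unfolding B_def card_image[OF injs] bij_betw_same_card[OF bij] using card_Diff_subset[OF fM MS] .
  have indep: "\<not> module.dependent fscale B"
  proof
    assume "module.dependent fscale B"
    then obtain w where w: "\<exists>v\<in>B. w v \<noteq> 0" "(\<Sum>v\<in>B. fscale (w v) v) = 0"
      using module.dependent_finite[OF md fB] by blast
    then obtain L0 where L0: "L0 \<in> Loops" "w (\<sigma> L0) \<noteq> 0" unfolding B_def by blast
    define x0 where "x0 = xo L0"
    have "(\<Sum>v\<in>B. fscale (w v) v) x0 = 0" using w(2) by simp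
    then have "(\<Sum>v\<in>B. w v * v x0) = 0" by (simp add: sum_fun_apply fscale_def)
    moreover have "(\<Sum>v\<in>B. w v * v x0) = w (\<sigma> L0) * \<sigma> L0 x0"
    proof -
      have v0: "\<sigma> L0 \<in> B" unfolding B_def using L0 by blast
      have "(\<Sum>v\<in>B - {\<sigma> L0}. w v * v x0) = 0"
      proof (rule sum.neutral, rule ballI)
        fix v assume "v \<in> B - {\<sigma> L0}"
        then obtain L where L: "L \<in> Loops" "v = \<sigma> L" "L \<noteq> L0" unfolding B_def by blast
        have "xo L \<noteq> x0" using inj[OF L(1) L0(1)] L(3) x0_def by blast
        moreover have x0SM: "x0 \<in> S - M" using Lp[OF L0(1)] unfolding x0_def by simp
        ultimately have "x0 \<notin> L" using uniqx[OF L(1) _ x0SM] by auto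
        then have "\<sigma> L x0 = 0" using Lprops[OF L(1)] by blast
        then show "w v * v x0 = 0" using L(2) by simp
      qed
      then show ?thesis using sum.remove[OF fB v0, of "\<lambda>v. w v * v x0"] by simp
    qed
    moreover have "x0 \<in> L0" using Lp[OF L0(1)] unfolding x0_def by simp
    then have "\<sigma> L0 x0 \<noteq> 0" using Lprops[OF L0(1)] by simp
    ultimately show False using L0(2) by simp
  qed
  define Lx where "Lx x = (SOME L. L \<in> Loops \<and> xo L = x)" for x
  have Lx: "Lx x \<in> Loops \<and> xo (Lx x) = x" if "x \<in> S - M" for x
    using someI_ex[OF ex[OF that, unfolded Bex_def]] unfolding Lx_def .
  have spanU: "U_perp n S \<subseteq> module.span fscale B"
  proof
    fix \<mu> assume mu: "\<mu> \<in> U_perp n S"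
    define F where "F = (\<Sum>x\<in>S - M. fscale (\<mu> x / \<sigma> (Lx x) x) (\<sigma> (Lx x)))"
    define \<nu> where "\<nu> = \<mu> - F"
    have FU: "F \<in> U_perp n S" unfolding F_def
      using Lx Lprops by (intro module.subspace_sum[OF md sub] module.subspace_scale[OF md sub]) blast
    have "\<nu> \<in> U_perp n S" unfolding \<nu>_def using module.subspace_diff[OF md sub mu FU] .
    moreover have "\<forall>z\<in>S - M. \<nu> z = 0"
    proof
      fix z assume z: "z \<in> S - M"
      have "F z = (\<Sum>x\<in>S - M. \<mu> x / \<sigma> (Lx x) x * \<sigma> (Lx x) z)"
        unfolding F_def by (simp add: sum_fun_apply fscale_def)
      also have "\<dots> = \<mu> z / \<sigma> (Lx z) z * \<sigma> (Lx z) z"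
      proof -
        have "(\<Sum>x\<in>S - M - {z}. \<mu> x / \<sigma> (Lx x) x * \<sigma> (Lx x) z) = 0"
        proof (rule sum.neutral, rule ballI)
          fix x assume x: "x \<in> S - M - {z}"
          then have "z \<notin> Lx x" using uniqx[of "Lx x" z] Lx[of x] z by auto
          then show "\<mu> x / \<sigma> (Lx x) x * \<sigma> (Lx x) z = 0" using Lprops[of "Lx x"] Lx[of x] x by auto
        qed
        then show ?thesis using sum.remove[of "S - M" z "\<lambda>x. \<mu> x / \<sigma> (Lx x) x * \<sigma> (Lx x) z"] fS z by simp
      qed
      also have "\<dots> = \<mu> z" using Lx[OF z] Lp[of "Lx z"] Lprops[of "Lx z"] by auto
      finally show "\<nu> z = 0" unfolding \<nu>_def by simp
    qed
    ultimately have "\<nu> = (\<lambda>_. 0)" using key_zero[OF fS SP MS gM] by blast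
    then have "\<mu> = F" unfolding \<nu>_def by (simp add: fun_eq_iff)
    moreover have "F \<in> module.span fscale B" unfolding F_def B_def
      using Lx by (intro module.span_sum[OF md] module.span_scale[OF md] module.span_base[OF md]) blast
    ultimately show "\<mu> \<in> module.span fscale B" by simp
  qed
  have spanEq: "module.span fscale B = U_perp n S"
    by (rule module.span_subspace[OF md BU spanU sub])
  have "vector_space.dim fscale (U_perp n S) = card S - card M"
    by (rule vector_space.dim_unique[OF vs BU spanU indep cardB])
  with BU indep spanEq show ?thesis unfolding B_def by blast
qed

end
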